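(* Let $\mathcal{A}=(Q,\delta,s)$ be an NFA over a finite alphabet $\Sigma$ and let $B$ be any bisimulation on $\mathcal{A}^{-1}$. Then the partition $\mathcal{P}_B$ is forward-stable on $\mathcal{A}$.
   Context: An NFA is $\mathcal{A}=(Q,\delta,s)$ with $\delta:Q\times\Sigma\to2^Q$; write $\delta_a(u)=\delta(u,a)$, $\delta_a(T)=\bigcup_{u\in T}\delta_a(u)$ and $\delta_a^{-1}(u)=\{v:u\in\delta_a(v)\}$. $\mathcal{A}^{-1}=(Q,\delta^{-1},s)$ is the NFA with $\delta^{-1}(u,a)=\delta^{-1}_a(u)$ (all transitions reversed). A bisimulation on an NFA $(Q,\gamma,s)$ is a relation $B\subseteq Q\times Q$ such that for all $(u,v)\in B$ and $a\in\Sigma$: if $u'\in\gamma_a(u)$ then there is $v'\in\gamma_a(v)$ with $(u',v')\in B$, and if $v'\in\gamma_a(v)$ then there is $u'\in\gamma_a(u)$ with $(u',v')\in B$. $\mathcal{P}_B$ is the partition of $Q$ into the weakly connected components of the directed graph $(Q,B)$. A partition $\mathcal{P}$ of $Q$ is forward-stable on $\mathcal{A}$ if for any parts $S,T\in\mathcal{P}$ and every $a\in\Sigma$, $S\subseteq\delta_a(T)$ or $S\cap\delta_a(T)=\emptyset$. *)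

theory Defs
  imports Main
begin

definition nfa :: "'q set \<Rightarrow> 'a set \<Rightarrow> ('q \<Rightarrow> 'a \<Rightarrow> 'q set) \<Rightarrow> 'q \<Rightarrow> bool" where
  "nfa Q \<Sigma> \<delta> s \<longleftrightarrow> finite Q \<and> finite \<Sigma> \<and> s \<in> Q \<and>
     (\<forall>u\<in>Q. \<forall>a\<in>\<Sigma>. \<delta> u a \<subseteq> Q)"

definition img :: "('q \<Rightarrow> 'a \<Rightarrow> 'q set) \<Rightarrow> 'a \<Rightarrow> 'q set \<Rightarrow> 'q set" where
  "img \<delta> a T = (\<Union>u\<in>T. \<delta> u a)"

definition rev_delta :: "'q set \<Rightarrow> ('q \<Rightarrow> 'a \<Rightarrow> 'q set) \<Rightarrow> 'q \<Rightarrow> 'a \<Rightarrow> 'q set" where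
  "rev_delta Q \<delta> u a = {v \<in> Q. u \<in> \<delta> v a}"

definition bisimulation :: "'q set \<Rightarrow> 'a set \<Rightarrow> ('q \<Rightarrow> 'a \<Rightarrow> 'q set) \<Rightarrow> ('q \<times> 'q) set \<Rightarrow> bool" where
  "bisimulation Q \<Sigma> \<gamma> B \<longleftrightarrow> B \<subseteq> Q \<times> Q \<and>
     (\<forall>(u,v)\<in>B. \<forall>a\<in>\<Sigma>.
        (\<forall>u'\<in>\<gamma> u a. \<exists>v'\<in>\<gamma> v a. (u',v') \<in> B) \<and>
        (\<forall>v'\<in>\<gamma> v a. \<exists>u'\<in>\<gamma> u a. (u',v') \<in> B))"

text \<open>Weakly connected components of the digraph (Q, B)\<close>
definition partition_of :: "'q set \<Rightarrow> ('q \<times> 'q) set \<Rightarrow> 'q set set" where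
  "partition_of Q B = Q // ((B \<union> B\<inverse>) \<inter> (Q \<times> Q))\<^sup>*"

definition forward_stable :: "'q set set \<Rightarrow> 'a set \<Rightarrow> ('q \<Rightarrow> 'a \<Rightarrow> 'q set) \<Rightarrow> bool" where
  "forward_stable P \<Sigma> \<delta> \<longleftrightarrow>
     (\<forall>S\<in>P. \<forall>T\<in>P. \<forall>a\<in>\<Sigma>. S \<subseteq> img \<delta> a T \<or> S \<inter> img \<delta> a T = {})"

end

theory Submission
  imports Defs
begin

lemma step_pres:
  assumes bis: "bisimulation Q \<Sigma> (rev_delta Q \<delta>) B"
    and a: "a \<in> \<Sigma>"
    and Tcl: "\<And>w w'. w \<in> T \<Longrightarrow> (w,w') \<in> B \<union> B\<inverse> \<Longrightarrow> w' \<in> T"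
    and yz: "(y,z) \<in> B \<union> B\<inverse>"
    and y: "y \<in> img \<delta> a T"
    and TQ: "T \<subseteq> Q"
  shows "z \<in> img \<delta> a T"
proof -
  from y obtain w where w: "w \<in> T" "y \<in> \<delta> w a" by (auto simp: img_def)
  have wr: "w \<in> rev_delta Q \<delta> y a" using w TQ by (auto simp: rev_delta_def)
  from yz show ?thesis
  proof
    assume "(y,z) \<in> B"
    then obtain w' where "w' \<in> rev_delta Q \<delta> z a" "(w,w') \<in> B"
      using bis a wr unfolding bisimulation_def by fast
    then show ?thesis using Tcl[OF w(1)] by (auto simp: img_def rev_delta_def)
  next
    assume "(y,z) \<in> B\<inverse>"
    then have "(z,y) \<in> B" by simp
    then obtain w' where "w' \<in> rev_delta Q \<delta> z a" "(w',w) \<in> B"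
      using bis a wr unfolding bisimulation_def by fast
    then show ?thesis using Tcl[OF w(1)] by (auto simp: img_def rev_delta_def)
  qed
qed

theorem lemma20:
  fixes Q :: "'q set" and \<Sigma> :: "'a set" and \<delta> :: "'q \<Rightarrow> 'a \<Rightarrow> 'q set" and s :: 'q
    and B :: "('q \<times> 'q) set"
  assumes "nfa Q \<Sigma> \<delta> s"
    and "bisimulation Q \<Sigma> (rev_delta Q \<delta>) B"
  shows "forward_stable (partition_of Q B) \<Sigma> \<delta>"
  unfolding forward_stable_def
proof (intro ballI)
  fix S T a
  assume S: "S \<in> partition_of Q B" and T: "T \<in> partition_of Q B" and a: "a \<in> \<Sigma>"
  define R where "R = ((B \<union> B\<inverse>) \<inter> (Q \<times> Q))\<^sup>*"
  have BQ: "B \<subseteq> Q \<times> Q" using assms(2) by (simp add: bisimulation_def)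
  from T obtain x where xQ: "x \<in> Q" and x: "T = R `` {x}" unfolding partition_of_def R_def quotient_def by blast
  from S obtain x' where x': "S = R `` {x'}" unfolding partition_of_def R_def quotient_def by blast
  have Tcl: "w' \<in> T" if "w \<in> T" "(w,w') \<in> B \<union> B\<inverse>" for w w'
  proof -
    have "(w,w') \<in> R" using that BQ unfolding R_def by blast
    then show ?thesis using that(1) x by (auto intro: rtrancl_trans simp: R_def)
  qed
  have TQ: "T \<subseteq> Q"
  proof
    fix v assume "v \<in> T"
    then have "(x,v) \<in> R" using x by simp
    then show "v \<in> Q" unfolding R_def using xQ by (induct rule: rtrancl_induct) auto
  qed
  have stp: "z \<in> img \<delta> a T" if "(y,z) \<in> B \<union> B\<inverse>" "y \<in> img \<delta> a T" for y z
    by (rule step_pres[OF assms(2) a _ that TQ]) (rule Tcl)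
  have fw: "v \<in> img \<delta> a T" if "(u,v) \<in> R" "u \<in> img \<delta> a T" for u v
    using that unfolding R_def
  proof (induct rule: rtrancl_induct)
    case (step y z) then show ?case
      using stp by blast
  qed simp
  have bw: "u \<in> img \<delta> a T" if "(u,v) \<in> R" "v \<in> img \<delta> a T" for u v
    using that unfolding R_def
  proof (induct rule: converse_rtrancl_induct)
    case (step y z)
    then have "(z,y) \<in> B \<union> B\<inverse>" by blast
    then show ?case using step stp by blast
  qed simp
  show "S \<subseteq> img \<delta> a T \<or> S \<inter> img \<delta> a T = {}"
  proof (cases "S \<inter> img \<delta> a T = {}")
    case False
    then obtain u where u: "u \<in> S" "u \<in> img \<delta> a T" by blast
    have "x' \<in> img \<delta> a T" using bw[of x' u] u x' by simp
    then have "S \<subseteq> img \<delta> a T" using fw x' by auto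
    then show ?thesis by simp
  qed simp
qed

end
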